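(* Let $\mathbf L=(L,\vee,\wedge,0,1)$ be a complemented lattice with $0\ne1$ and $D$ a deductive system of $\mathbf L$. Then: (i) $D$ is an order filter of $\mathbf L$ (i.e. $a\in D$ and $a\le b$ imply $b\in D$); (ii) if $x\to y\subseteq D$ for all $x,y\in D$, then $D$ is a filter of $\mathbf L$.
   Context: For $a\in L$, $a^+:=\{x\in L\mid a\vee x=1,\ a\wedge x=0\}$ (the set of all complements of $a$), and $a\to b:=\{x\vee(a\wedge b)\mid x\in a^+\}$. A deductive system of $\mathbf L$ is a subset $D\subseteq L$ such that $1\in D$, and whenever $a\in D$, $b\in L$ and $a\to b\subseteq D$, then $b\in D$. A filter is a non-empty order filter closed under $\wedge$. *)

theory Defs
  imports Main
begin

text \<open>A complemented lattice is modelled as a bounded lattice type in which every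
element has at least one complement (assumed explicitly in the theorem).\<close>

definition compls :: "'a::bounded_lattice \<Rightarrow> 'a set" where
  "compls a = {x. sup a x = top \<and> inf a x = bot}"

definition impl :: "'a::bounded_lattice \<Rightarrow> 'a \<Rightarrow> 'a set" where
  "impl a b = {sup x (inf a b) | x. x \<in> compls a}"

definition deductive_system :: "'a::bounded_lattice set \<Rightarrow> bool" where
  "deductive_system D \<longleftrightarrow> top \<in> D \<and> (\<forall>a b. a \<in> D \<and> impl a b \<subseteq> D \<longrightarrow> b \<in> D)"

definition order_filter :: "'a::bounded_lattice set \<Rightarrow> bool" where
  "order_filter D \<longleftrightarrow> (\<forall>a b. a \<in> D \<and> a \<le> b \<longrightarrow> b \<in> D)"

definition lattice_filter :: "'a::bounded_lattice set \<Rightarrow> bool" where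
  "lattice_filter D \<longleftrightarrow> D \<noteq> {} \<and> order_filter D \<and> (\<forall>a b. a \<in> D \<and> b \<in> D \<longrightarrow> inf a b \<in> D)"

end

theory Submission
  imports Defs
begin

theorem lemma1:
  fixes D :: "'a::bounded_lattice set"
  assumes complemented: "\<forall>a::'a. compls a \<noteq> {}"
    and nontriv: "(bot::'a) \<noteq> top"
    and ds: "deductive_system D"
  shows "order_filter D \<and>
    ((\<forall>x\<in>D. \<forall>y\<in>D. impl x y \<subseteq> D) \<longrightarrow> lattice_filter D)"
proof -
  have top: "top \<in> D" and mp: "\<And>a b. a \<in> D \<Longrightarrow> impl a b \<subseteq> D \<Longrightarrow> b \<in> D"
    using ds unfolding deductive_system_def by blast+
  have of: "order_filter D"
    unfolding order_filter_def
  proof (intro allI impI)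
    fix a b :: 'a assume h: "a \<in> D \<and> a \<le> b"
    have "impl a b \<subseteq> D"
    proof
      fix z assume "z \<in> impl a b"
      then obtain x where "x \<in> compls a" "z = sup x (inf a b)" unfolding impl_def by blast
      then have "z = top" using h unfolding compls_def
        by (simp add: inf_absorb1 sup_commute)
      then show "z \<in> D" using top by simp
    qed
    then show "b \<in> D" using mp h by blast
  qed
  moreover have "(\<forall>x\<in>D. \<forall>y\<in>D. impl x y \<subseteq> D) \<longrightarrow> lattice_filter D"
  proof
    assume H: "\<forall>x\<in>D. \<forall>y\<in>D. impl x y \<subseteq> D"
    have "\<forall>a b. a \<in> D \<and> b \<in> D \<longrightarrow> inf a b \<in> D"
    proof (intro allI impI)
      fix a b assume h: "a \<in> D \<and> b \<in> D"
      have "impl a (inf a b) = impl a b" unfolding impl_def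
        by (simp add: inf_assoc[symmetric])
      then show "inf a b \<in> D" using H h mp by metis
    qed
    then show "lattice_filter D" unfolding lattice_filter_def using of top by blast
  qed
  ultimately show ?thesis by blast
qed

end
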